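(* For every modal formula $A$ and label $x$, $\mathsf{labIGL}\vdash x:\Box(\Box A\to A)\to\Box A$; that is, the sequent $\emptyset\Rightarrow x:\Box(\Box A\to A)\to\Box A$ has an $\infty$-proof in $\mathsf{labIK4}$.
   Context: Modal formulas: $A ::= p \mid \bot \mid A\wedge A \mid A \vee A \mid A \to A \mid \Box A \mid \Diamond A$. Labelled sequents $\mathcal R,\Gamma\Rightarrow\Delta$ with $\mathcal R$ a set of relational atoms $xRy$ and $\Gamma,\Delta$ multisets of labelled formulas $x:A$. $\mathsf{labK4}$ rules (premisses / conclusion): id $\mathcal R,x:p\Rightarrow x:p$; $\bot$L $\mathcal R,x:\bot,\Gamma\Rightarrow\Delta$; cut: $\mathcal R,\Gamma\Rightarrow\Delta,x:A$ and $\mathcal R,\Gamma',x:A\Rightarrow\Delta'$ / $\mathcal R,\Gamma,\Gamma'\Rightarrow\Delta,\Delta'$; left/right weakening and contraction; thinning $\mathcal R,\Gamma\Rightarrow\Delta$ / $\mathcal R,\mathcal R',\Gamma\Rightarrow\Delta$; $\to$L: $\mathcal R,\Gamma\Rightarrow\Delta,x:A$ and $\mathcal R,\Gamma',x:B\Rightarrow\Delta'$ / $\mathcal R,\Gamma,\Gamma',x:A\to B\Rightarrow\Delta,\Delta'$; $\to$R: $\mathcal R,\Gamma,x:A\Rightarrow\Delta,x:B$ / $\mathcal R,\Gamma\Rightarrow\Delta,x:A\to B$; $\wedge$L, $\wedge$R, $\vee$L, $\vee$R as in Gentzen's LK on labelled formulas with the same label; $\Diamond$L ($y$ fresh): $\mathcal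 R,xRy,\Gamma,y:A\Rightarrow\Delta$ / $\mathcal R,\Gamma,x:\Diamond A\Rightarrow\Delta$; $\Diamond$R: $\mathcal R,xRy,\Gamma\Rightarrow\Delta,y:A$ / $\mathcal R,xRy,\Gamma\Rightarrow\Delta,x:\Diamond A$; $\Box$R ($y$ fresh): $\mathcal R,xRy,\Gamma\Rightarrow\Delta,y:A$ / $\mathcal R,\Gamma\Rightarrow\Delta,x:\Box A$; $\Box$L: $\mathcal R,xRy,\Gamma,y:A\Rightarrow\Delta$ / $\mathcal R,xRy,\Gamma,x:\Box A\Rightarrow\Delta$; tr: $\mathcal R,xRy,yRz,xRz,\Gamma\Rightarrow\Delta$ / $\mathcal R,xRy,yRz,\Gamma\Rightarrow\Delta$. $\mathsf{labIK4}$ is the restriction to sequents with exactly one labelled formula on the right. A preproof is a possibly infinite tree of rule instances whose leaves are zero-premiss rules; a trace along an infinite branch $(S_i)$ is a sequence of labels $(x_i)_{i\ge k}$ with, for each $i$, $x_i=x_{i+1}$ or $x_iRx_{i+1}$ in the relational context of $S_i$ (progress point); progressing = infinitely many progress points; an $\infty$-proof is a preproof all of whose infinite branches have a progressing trace. $\mathsf{labIGL}$ is the class of $\infty$-proofs of $\mathsf{labIK4}$. *)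

theory Defs
  imports "HOL-Library.Multiset"
begin

datatype 'p fm =
    Atom 'p
  | Bot
  | And "'p fm" "'p fm"
  | Or "'p fm" "'p fm"
  | Imp "'p fm" "'p fm"
  | Box "'p fm"
  | Dia "'p fm"

text \<open>Labels are natural numbers (an infinite supply, so fresh labels exist).
  A labelled formula x:A is the pair (x, A); a relational atom xRy is the pair (x, y).
  A sequent R, Gamma => Delta is a triple (R, Gamma, Delta) with R a set of relational
  atoms and Gamma, Delta multisets of labelled formulas.\<close>

type_synonym 'p lfm = "nat \<times> 'p fm"
type_synonym 'p seq = "(nat \<times> nat) set \<times> 'p lfm multiset \<times> 'p lfm multiset"

definition labels :: "'p seq \<Rightarrow> nat set" where
  "labels S = (case S of (R, \<Gamma>, \<Delta>) \<Rightarrow>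
      fst ` R \<union> snd ` R \<union> fst ` set_mset \<Gamma> \<union> fst ` set_mset \<Delta>)"

inductive k4_rule :: "'p seq list \<Rightarrow> 'p seq \<Rightarrow> bool" where
  ax_id: "k4_rule [] (R, {#(x, Atom p)#}, {#(x, Atom p)#})"
| botL: "k4_rule [] (R, add_mset (x, Bot) \<Gamma>, \<Delta>)"
| cut: "k4_rule [(R, \<Gamma>, add_mset (x, A) \<Delta>), (R, add_mset (x, A) \<Gamma>', \<Delta>')]
                (R, \<Gamma> + \<Gamma>', \<Delta> + \<Delta>')"
| wL: "k4_rule [(R, \<Gamma>, \<Delta>)] (R, add_mset (x, A) \<Gamma>, \<Delta>)"
| wR: "k4_rule [(R, \<Gamma>, \<Delta>)] (R, \<Gamma>, add_mset (x, A) \<Delta>)"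
| cL: "k4_rule [(R, add_mset (x, A) (add_mset (x, A) \<Gamma>), \<Delta>)] (R, add_mset (x, A) \<Gamma>, \<Delta>)"
| cR: "k4_rule [(R, \<Gamma>, add_mset (x, A) (add_mset (x, A) \<Delta>))] (R, \<Gamma>, add_mset (x, A) \<Delta>)"
| thin: "k4_rule [(R, \<Gamma>, \<Delta>)] (R \<union> R', \<Gamma>, \<Delta>)"
| impL: "k4_rule [(R, \<Gamma>, add_mset (x, A) \<Delta>), (R, add_mset (x, B) \<Gamma>', \<Delta>')]
                 (R, add_mset (x, Imp A B) (\<Gamma> + \<Gamma>'), \<Delta> + \<Delta>')"
| impR: "k4_rule [(R, add_mset (x, A) \<Gamma>, add_mset (x, B) \<Delta>)] (R, \<Gamma>, add_mset (x, Imp A B) \<Delta>)"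
| andL1: "k4_rule [(R, add_mset (x, A) \<Gamma>, \<Delta>)] (R, add_mset (x, And A B) \<Gamma>, \<Delta>)"
| andL2: "k4_rule [(R, add_mset (x, B) \<Gamma>, \<Delta>)] (R, add_mset (x, And A B) \<Gamma>, \<Delta>)"
| andR: "k4_rule [(R, \<Gamma>, add_mset (x, A) \<Delta>), (R, \<Gamma>, add_mset (x, B) \<Delta>)]
                 (R, \<Gamma>, add_mset (x, And A B) \<Delta>)"
| orL: "k4_rule [(R, add_mset (x, A) \<Gamma>, \<Delta>), (R, add_mset (x, B) \<Gamma>, \<Delta>)]
                (R, add_mset (x, Or A B) \<Gamma>, \<Delta>)"
| orR1: "k4_rule [(R, \<Gamma>, add_mset (x, A) \<Delta>)] (R, \<Gamma>, add_mset (x, Or A B) \<Delta>)"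
| orR2: "k4_rule [(R, \<Gamma>, add_mset (x, B) \<Delta>)] (R, \<Gamma>, add_mset (x, Or A B) \<Delta>)"
| diaL: "y \<notin> labels (R, add_mset (x, Dia A) \<Gamma>, \<Delta>) \<Longrightarrow>
         k4_rule [(insert (x, y) R, add_mset (y, A) \<Gamma>, \<Delta>)] (R, add_mset (x, Dia A) \<Gamma>, \<Delta>)"
| diaR: "k4_rule [(insert (x, y) R, \<Gamma>, add_mset (y, A) \<Delta>)]
                 (insert (x, y) R, \<Gamma>, add_mset (x, Dia A) \<Delta>)"
| boxR: "y \<notin> labels (R, \<Gamma>, add_mset (x, Box A) \<Delta>) \<Longrightarrow>
         k4_rule [(insert (x, y) R, \<Gamma>, add_mset (y, A) \<Delta>)] (R, \<Gamma>, add_mset (x, Box A) \<Delta>)"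
| boxL: "k4_rule [(insert (x, y) R, add_mset (y, A) \<Gamma>, \<Delta>)]
                 (insert (x, y) R, add_mset (x, Box A) \<Gamma>, \<Delta>)"
| tr: "k4_rule [(insert (x, z) (insert (x, y) (insert (y, z) R)), \<Gamma>, \<Delta>)]
               (insert (x, y) (insert (y, z) R), \<Gamma>, \<Delta>)"

text \<open>labIK4: the restriction to sequents with exactly one labelled formula on the right
  (imposed on the conclusion and on all premisses of the rule instance).\<close>

definition ik4_rule :: "'p seq list \<Rightarrow> 'p seq \<Rightarrow> bool" where
  "ik4_rule ps c \<longleftrightarrow> k4_rule ps c \<and> (\<forall>S \<in> set (c # ps). size (snd (snd S)) = 1)"

text \<open>A (possibly infinite) tree is given by a prefix-closed set N of node addresses
  (lists of child indices, root = []) and a labelling of nodes by sequents.\<close>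

definition ik4_preproof :: "nat list set \<Rightarrow> (nat list \<Rightarrow> 'p seq) \<Rightarrow> bool" where
  "ik4_preproof N lab \<longleftrightarrow>
     [] \<in> N \<and>
     (\<forall>w i. w @ [i] \<in> N \<longrightarrow> w \<in> N) \<and>
     (\<forall>w \<in> N. \<exists>k. (\<forall>i. w @ [i] \<in> N \<longleftrightarrow> i < k) \<and>
                   ik4_rule (map (\<lambda>i. lab (w @ [i])) [0..<k]) (lab w))"

text \<open>An infinite branch is given by a choice of child index c n at each depth n.\<close>

definition infinite_branch :: "nat list set \<Rightarrow> (nat \<Rightarrow> nat) \<Rightarrow> bool" where
  "infinite_branch N c \<longleftrightarrow> (\<forall>n. map c [0..<n] \<in> N)"

definition progressing_trace :: "(nat \<Rightarrow> 'p seq) \<Rightarrow> bool" where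
  "progressing_trace S \<longleftrightarrow>
     (\<exists>k (x :: nat \<Rightarrow> nat).
        (\<forall>i \<ge> k. x i = x (Suc i) \<or> (x i, x (Suc i)) \<in> fst (S i)) \<and>
        (\<forall>m. \<exists>i \<ge> max m k. (x i, x (Suc i)) \<in> fst (S i)))"

definition ik4_inf_proof :: "nat list set \<Rightarrow> (nat list \<Rightarrow> 'p seq) \<Rightarrow> bool" where
  "ik4_inf_proof N lab \<longleftrightarrow>
     ik4_preproof N lab \<and>
     (\<forall>c. infinite_branch N c \<longrightarrow> progressing_trace (\<lambda>n. lab (map c [0..<n])))"

definition labIGL_provable :: "'p seq \<Rightarrow> bool" where
  "labIGL_provable S \<longleftrightarrow> (\<exists>N lab. ik4_inf_proof N lab \<and> lab [] = S)"

end

theory Submission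
  imports Defs
begin

fun walk :: "('s \<Rightarrow> 's list) \<Rightarrow> 's \<Rightarrow> nat list \<Rightarrow> 's option" where
  "walk ch s [] = Some s"
| "walk ch s (i#w) = (if i < length (ch s) then walk ch (ch s ! i) w else None)"

lemma walk_snoc:
  "walk ch s (w@[i]) = (case walk ch s w of None \<Rightarrow> None
     | Some t \<Rightarrow> if i < length (ch t) then Some (ch t ! i) else None)"
  by (induction w arbitrary: s) auto

lemma unfold_proof:
  fixes sq :: "'s \<Rightarrow> 'p seq"
  assumes rule: "\<And>s. ik4_rule (map sq (ch s)) (sq s)"
    and prog: "\<And>T. T 0 = s0 \<Longrightarrow> (\<forall>n. T (Suc n) \<in> set (ch (T n))) \<Longrightarrow> progressing_trace (\<lambda>n. sq (T n))"
  shows "labIGL_provable (sq s0)"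
proof -
  define N where "N = {w. walk ch s0 w \<noteq> None}"
  define lab where "lab w = sq (the (walk ch s0 w))" for w
  have pre: "ik4_preproof N lab"
    unfolding ik4_preproof_def
  proof (intro conjI allI impI ballI)
    show "[] \<in> N" by (simp add: N_def)
  next
    fix w i assume "w @ [i] \<in> N"
    then show "w \<in> N" by (auto simp: N_def walk_snoc split: option.splits)
  next
    fix w assume "w \<in> N"
    then obtain t where t: "walk ch s0 w = Some t" by (auto simp: N_def)
    have 1: "\<forall>i. w @ [i] \<in> N \<longleftrightarrow> i < length (ch t)"
      by (simp add: N_def walk_snoc t)
    have "map (\<lambda>i. lab (w @ [i])) [0..<length (ch t)] = map sq (ch t)"
      by (rule nth_equalityI) (auto simp: lab_def walk_snoc t)
    with 1 rule[of t] t show "\<exists>k. (\<forall>i. w @ [i] \<in> N \<longleftrightarrow> i < k) \<and>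
                   ik4_rule (map (\<lambda>i. lab (w @ [i])) [0..<k]) (lab w)"
      by (intro exI[of _ "length (ch t)"]) (simp add: lab_def)
  qed
  have inf: "progressing_trace (\<lambda>n. lab (map c [0..<n]))" if ib: "infinite_branch N c" for c
  proof -
    define T where "T n = the (walk ch s0 (map c [0..<n]))" for n
    have W: "walk ch s0 (map c [0..<n]) = Some (T n)" for n
      using ib by (auto simp: infinite_branch_def N_def T_def)
    have "T (Suc n) \<in> set (ch (T n))" for n
    proof -
      have "walk ch s0 (map c [0..<n] @ [c n]) = Some (T (Suc n))" using W[of "Suc n"] by simp
      then show ?thesis by (auto simp: walk_snoc W split: if_splits) (metis nth_mem)
    qed
    moreover have "T 0 = s0" using W[of 0] by simp
    ultimately have "progressing_trace (\<lambda>n. sq (T n))" using prog by blast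
    moreover have "(\<lambda>n. lab (map c [0..<n])) = (\<lambda>n. sq (T n))"
      by (simp add: lab_def T_def)
    ultimately show ?thesis by simp
  qed
  have "lab [] = sq s0" by (simp add: lab_def)
  with pre inf show ?thesis
    unfolding labIGL_provable_def ik4_inf_proof_def by blast
qed


datatype 'p st = Root | R1 | L0 bool | L1 bool | L2 bool | L3 bool | L4 bool | L5 bool
  | Th "(nat \<times> nat) set" nat "'p fm" | I nat "'p fm"
  | AndM1 nat "'p fm" "'p fm" | AndM2 nat "'p fm" "'p fm"
  | OrM1 nat "'p fm" "'p fm" | OrM2 nat "'p fm" "'p fm"
  | ImpM nat "'p fm" "'p fm" | BoxM nat "'p fm" | DiaM nat "'p fm"

definition uu :: "nat \<Rightarrow> bool \<Rightarrow> nat" where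
  "uu x p = (if p then Suc x else Suc (Suc x))"

abbreviation Bx :: "'p fm \<Rightarrow> 'p fm" where "Bx A \<equiv> Box (Imp (Box A) A)"

fun sq :: "'p fm \<Rightarrow> nat \<Rightarrow> 'p st \<Rightarrow> 'p seq" where
  "sq A x Root = ({}, {#}, {#(x, Imp (Bx A) (Box A))#})"
| "sq A x R1 = ({}, {#(x, Bx A)#}, {#(x, Box A)#})"
| "sq A x (L0 p) = ({(x, uu x p)}, {#(x, Bx A)#}, {#(uu x p, A)#})"
| "sq A x (L1 p) = ({(x, uu x p)}, {#(x, Bx A), (x, Bx A)#}, {#(uu x p, A)#})"
| "sq A x (L2 p) = ({(x, uu x p)}, {#(uu x p, Imp (Box A) A), (x, Bx A)#}, {#(uu x p, A)#})"
| "sq A x (L3 p) = ({(x, uu x p)}, {#(x, Bx A)#}, {#(uu x p, Box A)#})"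
| "sq A x (L4 p) = ({(x, uu x p), (uu x p, uu x (\<not>p))}, {#(x, Bx A)#}, {#(uu x (\<not>p), A)#})"
| "sq A x (L5 p) = ({(x, uu x (\<not>p)), (x, uu x p), (uu x p, uu x (\<not>p))}, {#(x, Bx A)#}, {#(uu x (\<not>p), A)#})"
| "sq A x (Th R y C) = (R, {#(y, C)#}, {#(y, C)#})"
| "sq A x (I y C) = ({}, {#(y, C)#}, {#(y, C)#})"
| "sq A x (AndM1 y C D) = ({}, {#(y, And C D)#}, {#(y, C)#})"
| "sq A x (AndM2 y C D) = ({}, {#(y, And C D)#}, {#(y, D)#})"
| "sq A x (OrM1 y C D) = ({}, {#(y, C)#}, {#(y, Or C D)#})"
| "sq A x (OrM2 y C D) = ({}, {#(y, D)#}, {#(y, Or C D)#})"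
| "sq A x (ImpM y C D) = ({}, {#(y, C), (y, Imp C D)#}, {#(y, D)#})"
| "sq A x (BoxM y C) = ({(y, Suc y)}, {#(y, Box C)#}, {#(Suc y, C)#})"
| "sq A x (DiaM y C) = ({(y, Suc y)}, {#(Suc y, C)#}, {#(y, Dia C)#})"

fun ch :: "'p fm \<Rightarrow> nat \<Rightarrow> 'p st \<Rightarrow> 'p st list" where
  "ch A x Root = [R1]"
| "ch A x R1 = [L0 True]"
| "ch A x (L0 p) = [L1 p]"
| "ch A x (L1 p) = [L2 p]"
| "ch A x (L2 p) = [L3 p, Th {(x, uu x p)} (uu x p) A]"
| "ch A x (L3 p) = [L4 p]"
| "ch A x (L4 p) = [L5 p]"
| "ch A x (L5 p) = [L0 (\<not>p)]"
| "ch A x (Th R y C) = [I y C]"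
| "ch A x (I y (Atom q)) = []"
| "ch A x (I y Bot) = []"
| "ch A x (I y (And C D)) = [AndM1 y C D, AndM2 y C D]"
| "ch A x (I y (Or C D)) = [OrM1 y C D, OrM2 y C D]"
| "ch A x (I y (Imp C D)) = [ImpM y C D]"
| "ch A x (I y (Box C)) = [BoxM y C]"
| "ch A x (I y (Dia C)) = [DiaM y C]"
| "ch A x (AndM1 y C D) = [I y C]"
| "ch A x (AndM2 y C D) = [I y D]"
| "ch A x (OrM1 y C D) = [I y C]"
| "ch A x (OrM2 y C D) = [I y D]"
| "ch A x (ImpM y C D) = [I y C, I y D]"
| "ch A x (BoxM y C) = [Th {(y, Suc y)} (Suc y) C]"
| "ch A x (DiaM y C) = [Th {(y, Suc y)} (Suc y) C]"

lemma k4_eq: "k4_rule ps c \<Longrightarrow> c = c' \<Longrightarrow> k4_rule ps c'" by simp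

lemma rule_ok: "ik4_rule (map (sq A x) (ch A x s)) (sq A x s)"
proof (cases s)
  case Root then show ?thesis
    using k4_rule.impR[of "{}" x "Bx A" "{#}" "Box A" "{#}"] by (simp add: ik4_rule_def)
next
  case R1 then show ?thesis
    using k4_rule.boxR[of "Suc x" "{}" "{#(x, Bx A)#}" x A "{#}"]
    by (simp add: ik4_rule_def labels_def uu_def)
next
  case (L0 p) then show ?thesis
    using k4_rule.cL[of "{(x, uu x p)}" x "Bx A" "{#}" "{#(uu x p, A)#}"]
    by (simp add: ik4_rule_def)
next
  case (L1 p) then show ?thesis
    using k4_rule.boxL[of x "uu x p" "{}" "Imp (Box A) A" "{#(x, Bx A)#}" "{#(uu x p, A)#}"]
    by (simp add: ik4_rule_def)
next
  case (L2 p) then show ?thesis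
    using k4_rule.impL[of "{(x, uu x p)}" "{#(x, Bx A)#}" "uu x p" "Box A" "{#}" A "{#}" "{#(uu x p, A)#}"]
    by (simp add: ik4_rule_def)
next
  case (L3 p) then show ?thesis
    using k4_rule.boxR[of "uu x (\<not>p)" "{(x, uu x p)}" "{#(x, Bx A)#}" "uu x p" A "{#}"]
    by (auto simp add: ik4_rule_def labels_def uu_def insert_commute)
next
  case (L4 p) then show ?thesis
    using k4_rule.tr[of x "uu x (\<not>p)" "uu x p" "{}" "{#(x, Bx A)#}" "{#(uu x (\<not>p), A)#}"]
    by (simp add: ik4_rule_def)
next
  case (L5 p) then show ?thesis
    using k4_rule.thin[of "{(x, uu x (\<not>p))}" "{#(x, Bx A)#}" "{#(uu x (\<not>p), A)#}"
        "{(x, uu x p), (uu x p, uu x (\<not>p))}"]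
    by (simp add: ik4_rule_def uu_def insert_commute)
next
  case (Th R y C) then show ?thesis
    using k4_rule.thin[of "{}" "{#(y, C)#}" "{#(y, C)#}" R]
    by (simp add: ik4_rule_def)
next
  case (I y C) then show ?thesis
  proof (cases C)
    case (Atom q) then show ?thesis using I k4_rule.ax_id[of "{}" y q]
      by (simp add: ik4_rule_def)
  next
    case Bot then show ?thesis using I k4_rule.botL[of "{}" y "{#}" "{#(y, Bot)#}"]
      by (simp add: ik4_rule_def)
  next
    case (And C1 C2) then show ?thesis using I k4_rule.andR[of "{}" "{#(y, C)#}" y C1 "{#}" C2]
      by (simp add: ik4_rule_def)
  next
    case (Or C1 C2) then show ?thesis using I k4_rule.orL[of "{}" y C1 "{#}" "{#(y, C)#}" C2]
      by (simp add: ik4_rule_def)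
  next
    case (Imp C1 C2) then show ?thesis using I k4_rule.impR[of "{}" y C1 "{#(y, C)#}" C2 "{#}"]
      by (simp add: ik4_rule_def)
  next
    case (Box C1) then show ?thesis using I k4_rule.boxR[of "Suc y" "{}" "{#(y, C)#}" y C1 "{#}"]
      by (simp add: ik4_rule_def labels_def)
  next
    case (Dia C1) then show ?thesis using I k4_rule.diaL[of "Suc y" "{}" y C1 "{#}" "{#(y, C)#}"]
      by (simp add: ik4_rule_def labels_def)
  qed
next
  case (AndM1 y C D) then show ?thesis using k4_rule.andL1[of "{}" y C "{#}" "{#(y, C)#}" D]
    by (simp add: ik4_rule_def)
next
  case (AndM2 y C D) then show ?thesis using k4_rule.andL2[of "{}" y D "{#}" "{#(y, D)#}" C]
    by (simp add: ik4_rule_def)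
next
  case (OrM1 y C D) then show ?thesis using k4_rule.orR1[of "{}" "{#(y, C)#}" y C "{#}" D]
    by (simp add: ik4_rule_def)
next
  case (OrM2 y C D) then show ?thesis using k4_rule.orR2[of "{}" "{#(y, D)#}" y D "{#}" C]
    by (simp add: ik4_rule_def)
next
  case (ImpM y C D) then show ?thesis
    using k4_rule.impL[of "{}" "{#(y, C)#}" y C "{#}" D "{#}" "{#(y, D)#}"]
    by (simp add: ik4_rule_def add_mset_commute)
next
  case (BoxM y C) then show ?thesis
    using k4_rule.boxL[of y "Suc y" "{}" C "{#}" "{#(Suc y, C)#}"]
    by (simp add: ik4_rule_def)
next
  case (DiaM y C) then show ?thesis
    using k4_rule.diaR[of y "Suc y" "{}" "{#(Suc y, C)#}" C "{#}"]
    by (simp add: ik4_rule_def)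
qed


fun main :: "'p st \<Rightarrow> bool" where
  "main Root = True" | "main R1 = True" | "main (L0 p) = True" | "main (L1 p) = True"
| "main (L2 p) = True" | "main (L3 p) = True" | "main (L4 p) = True" | "main (L5 p) = True"
| "main _ = False"

fun nxt :: "'p st \<Rightarrow> 'p st" where
  "nxt Root = R1" | "nxt R1 = L0 True" | "nxt (L0 p) = L1 p" | "nxt (L1 p) = L2 p"
| "nxt (L2 p) = L3 p" | "nxt (L3 p) = L4 p" | "nxt (L4 p) = L5 p" | "nxt (L5 p) = L0 (\<not>p)"
| "nxt s = s"

fun msr :: "'p st \<Rightarrow> nat" where
  "msr (Th R y C) = 3 * size C + 2"
| "msr (I y C) = 3 * size C + 1"
| "msr (AndM1 y C D) = 3 * size (And C D)"
| "msr (AndM2 y C D) = 3 * size (And C D)"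
| "msr (OrM1 y C D) = 3 * size (Or C D)"
| "msr (OrM2 y C D) = 3 * size (Or C D)"
| "msr (ImpM y C D) = 3 * size (Imp C D)"
| "msr (BoxM y C) = 3 * size (Box C)"
| "msr (DiaM y C) = 3 * size (Dia C)"
| "msr _ = 0"

fun lbl :: "nat \<Rightarrow> 'p st \<Rightarrow> nat" where
  "lbl x Root = Suc x" | "lbl x R1 = Suc x" | "lbl x (L0 p) = uu x p" | "lbl x (L1 p) = uu x p"
| "lbl x (L2 p) = uu x p" | "lbl x (L3 p) = uu x p" | "lbl x (L4 p) = uu x p"
| "lbl x (L5 p) = uu x (\<not>p)" | "lbl x _ = 0"

lemma ch_main: "main s \<Longrightarrow> t \<in> set (ch A x s) \<Longrightarrow> main t \<Longrightarrow> t = nxt s"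
  by (cases s) auto

lemma ch_nonmain: "\<not> main s \<Longrightarrow> t \<in> set (ch A x s) \<Longrightarrow> \<not> main t \<and> msr t < msr s"
proof (cases s)
  case (I y C) then show "\<not> main s \<Longrightarrow> t \<in> set (ch A x s) \<Longrightarrow> \<not> main t \<and> msr t < msr s"
    by (cases C) auto
qed auto

lemma lbl_step: "main s \<Longrightarrow> lbl x s = lbl x (nxt s) \<or> (lbl x s, lbl x (nxt s)) \<in> fst (sq A x s)"
  by (cases s) (auto simp: uu_def)

lemma reach_L4: "main s \<Longrightarrow> \<exists>j p. (nxt ^^ j) s = L4 p"
proof (cases s)
  case Root then show ?thesis by (intro exI[of _ 6]) (auto simp add: numeral_eq_Suc)
next
  case R1 then show ?thesis by (intro exI[of _ 5]) (auto simp add: numeral_eq_Suc)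
next
  case (L0 p) then show ?thesis by (intro exI[of _ 4]) (auto simp add: numeral_eq_Suc)
next
  case (L1 p) then show ?thesis by (intro exI[of _ 3]) (auto simp add: numeral_eq_Suc)
next
  case (L2 p) then show ?thesis by (intro exI[of _ 2]) (auto simp add: numeral_eq_Suc)
next
  case (L3 p) then show ?thesis by (intro exI[of _ 1]) simp
next
  case (L4 p) then show ?thesis by (intro exI[of _ 0]) simp
next
  case (L5 p) then show ?thesis by (intro exI[of _ 5]) (auto simp add: numeral_eq_Suc)
qed auto

lemma prog:
  assumes T0: "T 0 = Root" and TS: "\<forall>n. T (Suc n) \<in> set (ch A x (T n))"
  shows "progressing_trace (\<lambda>n. sq A x (T n))"
proof -
  have allmain: "main (T n)" for n
  proof (rule ccontr)
    assume nm: "\<not> main (T n)"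
    have "\<not> main (T (n + j)) \<and> msr (T (n + j)) + j \<le> msr (T n)" for j
    proof (induction j)
      case 0 then show ?case using nm by simp
    next
      case (Suc j)
      then have "\<not> main (T (Suc (n + j))) \<and> msr (T (Suc (n + j))) < msr (T (n + j))"
        using ch_nonmain TS by blast
      with Suc show ?case by simp
    qed
    from this[of "Suc (msr (T n))"] show False by simp
  qed
  have step: "T (Suc n) = nxt (T n)" for n
    using ch_main allmain TS by blast
  have pw: "T (i + j) = (nxt ^^ j) (T i)" for i j
    by (induction j) (simp_all add: step)
  show ?thesis unfolding progressing_trace_def
  proof (rule exI[of _ 0], rule exI[of _ "\<lambda>i. lbl x (T i)"], intro conjI allI impI)
    fix i show "lbl x (T i) = lbl x (T (Suc i)) \<or> (lbl x (T i), lbl x (T (Suc i))) \<in> fst (sq A x (T i))"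
      using lbl_step[OF allmain[of i], of x A] step[of i] by simp
  next
    fix m
    obtain j p where "(nxt ^^ j) (T m) = L4 p" using reach_L4 allmain by blast
    then have "T (m + j) = L4 p" using pw by simp
    then have "(lbl x (T (m + j)), lbl x (T (Suc (m + j)))) \<in> fst (sq A x (T (m + j)))"
      using step[of "m + j"] by simp
    then show "\<exists>i\<ge>max m 0. (lbl x (T i), lbl x (T (Suc i))) \<in> fst (sq A x (T i))"
      by (metis le_add1 max_0R)
  qed
qed

theorem mainTheorem15:
  fixes A :: "'p fm" and x :: nat
  shows "labIGL_provable ({}, {#}, {#(x, Imp (Box (Imp (Box A) A)) (Box A))#})"
proof -
  have "labIGL_provable (sq A x Root)"
    apply (rule unfold_proof[where ch = "ch A x" and sq = "sq A x"])
     apply (rule rule_ok)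
    apply (erule prog, assumption)
    done
  then show ?thesis by simp
qed

end
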